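(* Let $S$ be a nonempty complete lattice and let $F:S\to 2^S$ be a lower V-ascending correspondence. Suppose that for every $x\in S$, the value $F(x)$ has a least element. Then $F$ has a least fixed point, i.e. the set $\{s\in S:s\in F(s)\}$ is nonempty and has a least element.
   Context: A poset $S$ is a complete lattice if every nonempty subset has a supremum and infimum in $S$. A correspondence $F:S\to 2^S$ on a lattice $S$ is lower V-ascending if for all $x<x'$ in $S$ (strict inequality), every $y\in F(x)$ and every $y'\in F(x')$, one has $y\wedge y'\in F(x)$. *)

theory Defs
  imports Main
begin

definition lower_V_ascending :: "('a::lattice \<Rightarrow> 'a set) \<Rightarrow> bool" where
  "lower_V_ascending F \<longleftrightarrow>
     (\<forall>x x'. x < x' \<longrightarrow> (\<forall>y\<in>F x. \<forall>y'\<in>F x'. inf y y' \<in> F x))"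

definition has_least :: "'a::order set \<Rightarrow> bool" where
  "has_least A \<longleftrightarrow> (\<exists>m\<in>A. \<forall>y\<in>A. m \<le> y)"

end

theory Submission
  imports Defs
begin

theorem lemma2p10:
  fixes F :: "'a::complete_lattice \<Rightarrow> 'a set"
  assumes "lower_V_ascending F"
    and "\<And>x. has_least (F x)"
  shows "{s. s \<in> F s} \<noteq> {} \<and> has_least {s. s \<in> F s}"
proof -
  define f where "f x = (SOME m. m \<in> F x \<and> (\<forall>y\<in>F x. m \<le> y))" for x
  have fF: "f x \<in> F x \<and> (\<forall>y\<in>F x. f x \<le> y)" for x
  proof -
    have "\<exists>m. m \<in> F x \<and> (\<forall>y\<in>F x. m \<le> y)"
      using assms(2)[of x] unfolding has_least_def by blast
    then show ?thesis unfolding f_def by (rule someI_ex)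
  qed
  have mono: "mono f"
  proof (rule monoI)
    fix x x' :: 'a assume "x \<le> x'"
    show "f x \<le> f x'"
    proof (cases "x = x'")
      case False
      then have "x < x'" using \<open>x \<le> x'\<close> by simp
      then have "inf (f x) (f x') \<in> F x" using assms(1) fF unfolding lower_V_ascending_def by blast
      then have "f x \<le> inf (f x) (f x')" using fF by blast
      then show ?thesis using le_inf_iff by blast
    qed simp
  qed
  have fxp: "lfp f = f (lfp f)" using lfp_unfold[OF mono] .
  have mem: "lfp f \<in> F (lfp f)" using fF[of "lfp f"] fxp by simp
  have least: "lfp f \<le> s" if "s \<in> F s" for s
    using lfp_lowerbound[of f s] fF[of s] that by blast
  show ?thesis unfolding has_least_def using mem least by blast
qed

end
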